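(* Let $m\in\mathbb Z\setminus\{0\}$. (a) For $\xi,\xi'\in\mathbb Z_m$ the following are equivalent: (1) there is a positive integer $d$ with $\gcd(\xi,m)=\gcd(\xi',m)=d$ and $\pi(\xi/d)=\pi(\xi'/d)$, where $\pi:\mathbb Z_m\to\mathbb Z_{m/d}$ is the canonical ring homomorphism; (2) $r_i(\xi)=r_i(\xi')$ for every $i\ge1$. (b) The map $\xi\mapsto (r_i(\xi))_{i\ge1}$ is a homeomorphism from the group of units $\mathbb Z_m^\times$ onto $(\mathbb Z/m\mathbb Z)^\times\times(\mathbb Z/m\mathbb Z)^{\mathbb N}$ with the product topology, where $\mathbb Z/m\mathbb Z$ is identified with $\{0,\dots,|m|-1\}$ and $(\mathbb Z/m\mathbb Z)^\times$ with the elements of $\{0,\dots,|m|-1\}$ coprime to $m$.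
   Context: $\mathbb Z_m=\varprojlim\mathbb Z/m^h\mathbb Z$ is the ring of $m$-adic integers with the $m$-adic topology. Every nonzero ideal of $\mathbb Z_m$ is uniquely of the form $d\mathbb Z_m$ with $d$ a positive integer whose prime divisors divide $m$; for $n\in\mathbb Z$, $\xi\in\mathbb Z_m$, $\gcd(n,\xi)$ is the positive integer $d$ with $n\mathbb Z_m+\xi\mathbb Z_m=d\mathbb Z_m$; since nonzero integers are not zero divisors in $\mathbb Z_m$, $\xi/d\in\mathbb Z_m$ is well defined when $\xi\in d\mathbb Z_m$. The functions $r_i$: for $\xi\in\mathbb Z_m$, $r_0(\xi)=0$, $s_0(\xi)=1$, and for $i\ge1$, $r_i(\xi)\in\{0,\dots,|m|-1\}$ and $s_i(\xi)\in\mathbb Z_m$ are the unique elements with $\xi s_{i-1}(\xi)=m s_i(\xi)+r_i(\xi)$. *)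

theory Defs
  imports "HOL-Analysis.Analysis" "HOL-Computational_Algebra.Primes"
begin

text \<open>The ring of m-adic integers as the inverse limit of the rings Z/m^h Z:
  compatible sequences of residues x h in {0..<|m|^h}.\<close>

definition zm :: "int \<Rightarrow> (nat \<Rightarrow> int) set" where
  "zm m = {x. \<forall>h. 0 \<le> x h \<and> x h < \<bar>m\<bar> ^ h \<and> x (Suc h) mod \<bar>m\<bar> ^ h = x h}"

definition zm_of_int :: "int \<Rightarrow> int \<Rightarrow> (nat \<Rightarrow> int)" where
  "zm_of_int m n = (\<lambda>h. n mod \<bar>m\<bar> ^ h)"

definition zm_add :: "int \<Rightarrow> (nat \<Rightarrow> int) \<Rightarrow> (nat \<Rightarrow> int) \<Rightarrow> (nat \<Rightarrow> int)" where
  "zm_add m x y = (\<lambda>h. (x h + y h) mod \<bar>m\<bar> ^ h)"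

definition zm_mul :: "int \<Rightarrow> (nat \<Rightarrow> int) \<Rightarrow> (nat \<Rightarrow> int) \<Rightarrow> (nat \<Rightarrow> int)" where
  "zm_mul m x y = (\<lambda>h. (x h * y h) mod \<bar>m\<bar> ^ h)"

definition zm_units :: "int \<Rightarrow> (nat \<Rightarrow> int) set" where
  "zm_units m = {x \<in> zm m. \<exists>y \<in> zm m. zm_mul m x y = zm_of_int m 1}"

definition zm_ideal :: "int \<Rightarrow> (nat \<Rightarrow> int) \<Rightarrow> (nat \<Rightarrow> int) set" where
  "zm_ideal m x = {zm_mul m x c | c. c \<in> zm m}"

definition zm_gcd :: "int \<Rightarrow> int \<Rightarrow> (nat \<Rightarrow> int) \<Rightarrow> int" where
  "zm_gcd m n \<xi> = (THE d::int. d > 0 \<and> (\<forall>p::int. prime p \<longrightarrow> p dvd d \<longrightarrow> p dvd m) \<and>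
     {zm_add m (zm_mul m (zm_of_int m n) a) (zm_mul m \<xi> b) | a b. a \<in> zm m \<and> b \<in> zm m}
       = zm_ideal m (zm_of_int m d))"

definition zm_div :: "int \<Rightarrow> (nat \<Rightarrow> int) \<Rightarrow> int \<Rightarrow> (nat \<Rightarrow> int)" where
  "zm_div m \<xi> d = (THE \<eta>. \<eta> \<in> zm m \<and> zm_mul m (zm_of_int m d) \<eta> = \<xi>)"

text \<open>Canonical ring homomorphism Z_m \<rightarrow> Z_k (for k all of whose primes divide m,
  so that k^h divides m^h): reduce the h-th component modulo |k|^h.\<close>
definition zm_proj :: "int \<Rightarrow> (nat \<Rightarrow> int) \<Rightarrow> (nat \<Rightarrow> int)" where
  "zm_proj k \<xi> = (\<lambda>h. \<xi> h mod \<bar>k\<bar> ^ h)"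

primrec zm_rs :: "int \<Rightarrow> (nat \<Rightarrow> int) \<Rightarrow> nat \<Rightarrow> int \<times> (nat \<Rightarrow> int)" where
  "zm_rs m \<xi> 0 = (0, zm_of_int m 1)"
| "zm_rs m \<xi> (Suc i) = (THE p. 0 \<le> fst p \<and> fst p < \<bar>m\<bar> \<and> snd p \<in> zm m \<and>
      zm_mul m \<xi> (snd (zm_rs m \<xi> i)) = zm_add m (zm_mul m (zm_of_int m m) (snd p)) (zm_of_int m (fst p)))"

definition zm_r :: "int \<Rightarrow> nat \<Rightarrow> (nat \<Rightarrow> int) \<Rightarrow> int" where
  "zm_r m i \<xi> = fst (zm_rs m \<xi> i)"

definition zm_top :: "int \<Rightarrow> (nat \<Rightarrow> int) topology" where
  "zm_top m = subtopology (product_topology (\<lambda>h. discrete_topology {0..<\<bar>m\<bar> ^ h}) UNIV) (zm m)"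

end

theory Submission
  imports Defs
begin

lemma absdvd_cancel: fixes m D q :: int
  assumes "m \<noteq> 0" "\<bar>m\<bar> * q dvd m * D" shows "q dvd D"
proof -
  have "\<bar>m\<bar> * D = (if m \<ge> 0 then m * D else - (m * D))" by simp
  then have "\<bar>m\<bar> * q dvd \<bar>m\<bar> * D" using assms(2) by (simp split: if_splits)
  then show ?thesis using assms(1) by simp
qed


fun Sq :: "int \<Rightarrow> int \<Rightarrow> nat \<Rightarrow> int" where
  "Sq m x 0 = 1"
| "Sq m x (Suc i) = (x * Sq m x i - (x * Sq m x i) mod \<bar>m\<bar>) div m"

fun Rq :: "int \<Rightarrow> int \<Rightarrow> nat \<Rightarrow> int" where
  "Rq m x 0 = 0"
| "Rq m x (Suc i) = (x * Sq m x i) mod \<bar>m\<bar>"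

declare Sq.simps(2)[simp del] Rq.simps(2)[simp del]

lemma Sq_eq:
  assumes "m \<noteq> 0"
  shows "m * Sq m x (Suc i) = x * Sq m x i - Rq m x (Suc i)"
proof -
  have "m dvd x * Sq m x i - (x * Sq m x i) mod \<bar>m\<bar>"
    by (subst abs_dvd_iff[symmetric]) (rule dvd_minus_mod)
  then show ?thesis by (simp add: dvd_mult_div_cancel Sq.simps Rq.simps)
qed

lemma Rq_range: "m \<noteq> 0 \<Longrightarrow> 0 \<le> Rq m x i \<and> Rq m x i < \<bar>m\<bar>"
  by (cases i) (auto simp: Rq.simps)

lemma dep:
  assumes m: "m \<noteq> 0" and c: "\<bar>m\<bar>^k dvd x - x'"
  shows "i \<le> k \<Longrightarrow> Rq m x i = Rq m x' i \<and> \<bar>m\<bar>^(k-i) dvd Sq m x i - Sq m x' i"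
proof (induction i)
  case 0
  then show ?case by simp
next
  case (Suc i)
  then have IH: "Rq m x i = Rq m x' i" "\<bar>m\<bar>^(k-i) dvd Sq m x i - Sq m x' i" by auto
  have ki: "k - i = Suc (k - Suc i)" using Suc.prems by simp
  have "\<bar>m\<bar>^(k-i) dvd \<bar>m\<bar>^k" by (simp add: le_imp_power_dvd)
  with c have c2: "\<bar>m\<bar>^(k-i) dvd x - x'" by (meson dvd_trans)
  have "x * Sq m x i - x' * Sq m x' i = x * (Sq m x i - Sq m x' i) + (x - x') * Sq m x' i"
    by (simp add: algebra_simps)
  moreover have "\<bar>m\<bar>^(k-i) dvd x * (Sq m x i - Sq m x' i) + (x - x') * Sq m x' i"
    using IH(2) c2 by (simp add: dvd_add)
  ultimately have D: "\<bar>m\<bar>^(k-i) dvd x * Sq m x i - x' * Sq m x' i" by simp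
  then have "\<bar>m\<bar> dvd x * Sq m x i - x' * Sq m x' i"
    using ki by (metis dvd_mult_left power_Suc)
  then have R: "Rq m x (Suc i) = Rq m x' (Suc i)"
    by (simp add: mod_eq_dvd_iff Rq.simps)
  have "m * (Sq m x (Suc i) - Sq m x' (Suc i)) = x * Sq m x i - x' * Sq m x' i"
    using Sq_eq[OF m, of x i] Sq_eq[OF m, of x' i] R by (simp add: algebra_simps)
  with D have "\<bar>m\<bar> * \<bar>m\<bar>^(k - Suc i) dvd m * (Sq m x (Suc i) - Sq m x' (Suc i))"
    using ki by simp
  then have "\<bar>m\<bar>^(k - Suc i) dvd Sq m x (Suc i) - Sq m x' (Suc i)"
    using m absdvd_cancel by blast
  with R show ?case by simp
qed

lemma Dlem:
  assumes m: "m \<noteq> 0"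
  shows "i < N \<Longrightarrow> \<exists>e. Sq m (x + m^N * t) (Suc i) - Sq m x (Suc i) = m^(N - Suc i) * x^i * t + m^(N-i) * e"
proof (induction i)
  case 0
  have c: "\<bar>m\<bar>^N dvd (x + m^N * t) - x" by (simp add: power_abs[symmetric])
  have R: "Rq m (x + m^N * t) 1 = Rq m x 1"
    using dep[OF m c, of 1] 0 by simp
  have "m * (Sq m (x + m^N * t) 1 - Sq m x 1) = m^N * t"
    using Sq_eq[OF m, of "x + m^N * t" 0] Sq_eq[OF m, of x 0] R by (simp add: algebra_simps)
  also have "\<dots> = m * (m^(N - 1) * t)" using 0 by (cases N) auto
  finally have "Sq m (x + m^N * t) 1 - Sq m x 1 = m^(N - 1) * t" using m by simp
  then show ?case by (intro exI[of _ 0]) simp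
next
  case (Suc i)
  then obtain e where e: "Sq m (x + m^N * t) (Suc i) - Sq m x (Suc i) = m^(N - Suc i) * x^i * t + m^(N-i) * e"
    by auto
  define x' where "x' = x + m^N * t"
  have c: "\<bar>m\<bar>^N dvd x' - x" unfolding x'_def by (simp add: power_abs[symmetric])
  have R: "Rq m x' (Suc (Suc i)) = Rq m x (Suc (Suc i))"
    using dep[OF m c, of "Suc (Suc i)"] Suc.prems by simp
  obtain k where k: "N = Suc (Suc i) + k" using Suc.prems by (metis less_iff_Suc_add add_Suc)
  have "m * (Sq m x' (Suc (Suc i)) - Sq m x (Suc (Suc i))) = x' * Sq m x' (Suc i) - x * Sq m x (Suc i)"
    using Sq_eq[OF m, of x' "Suc i"] Sq_eq[OF m, of x "Suc i"] R by (simp add: algebra_simps)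
  also have "\<dots> = x * (Sq m x' (Suc i) - Sq m x (Suc i)) + m^N * t * Sq m x' (Suc i)"
    by (simp add: x'_def algebra_simps)
  also have "\<dots> = x * (m^(N - Suc i) * x^i * t + m^(N-i) * e) + m^N * t * Sq m x' (Suc i)"
    using e x'_def by simp
  also have "\<dots> = m * (m^(N - Suc (Suc i)) * x^(Suc i) * t + m^(N - Suc i) * (x * e + m^i * t * Sq m x' (Suc i)))"
    by (simp add: k algebra_simps power_add)
  finally have "Sq m x' (Suc (Suc i)) - Sq m x (Suc (Suc i)) = m^(N - Suc (Suc i)) * x^(Suc i) * t + m^(N - Suc i) * (x * e + m^i * t * Sq m x' (Suc i))"
    using m by simp
  then show ?case unfolding x'_def by blast
qed

lemma key:
  assumes m: "m \<noteq> 0"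
  shows "Rq m (x + m^N * t) (Suc N) = (Rq m x (Suc N) + x^N * t) mod \<bar>m\<bar>"
proof (cases N)
  case 0
  then show ?thesis by (simp add: mod_simps Rq.simps)
next
  case (Suc n)
  obtain e where e: "Sq m (x + m^N * t) (Suc n) - Sq m x (Suc n) = m^(N - Suc n) * x^n * t + m^(N-n) * e"
    using Dlem[OF m, of n N x t] Suc by auto
  have e': "Sq m (x + m^N * t) N = Sq m x N + x^n * t + m * e" using e Suc by simp
  have "(x + m^N * t) * Sq m (x + m^N * t) N = x * Sq m x N + x^N * t + m * (x * e + m^n * t * Sq m (x + m^N * t) N)"
    unfolding e' using Suc by (simp add: algebra_simps)
  then have "Rq m (x + m^N * t) (Suc N) = (x * Sq m x N + x^N * t + m * (x * e + m^n * t * Sq m (x + m^N * t) N)) mod \<bar>m\<bar>"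
    by (simp add: Rq.simps)
  also have "\<dots> = (x * Sq m x N + x^N * t) mod \<bar>m\<bar>"
    by (simp add: mod_eq_dvd_iff abs_dvd_iff)
  also have "\<dots> = (Rq m x (Suc N) + x^N * t) mod \<bar>m\<bar>" by (simp add: mod_simps Rq.simps)
  finally show ?thesis .
qed

lemma scale:
  assumes d: "d > 0" and m': "m' \<noteq> 0"
  shows "Rq (d * m') (d * y) i = d * Rq m' y i \<and> Sq (d * m') (d * y) i = Sq m' y i"
proof (induction i)
  case 0
  then show ?case by simp
next
  case (Suc i)
  then have S: "Sq (d * m') (d * y) i = Sq m' y i" by simp
  have ad: "\<bar>d * m'\<bar> = d * \<bar>m'\<bar>" using d by (simp add: abs_mult)
  have R: "Rq (d * m') (d * y) (Suc i) = d * Rq m' y (Suc i)"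
    by (simp add: Rq.simps S ad mult.assoc)
  have "(d * m') * Sq (d * m') (d * y) (Suc i) = d * y * Sq (d * m') (d * y) i - Rq (d * m') (d * y) (Suc i)"
    using Sq_eq[of "d * m'" "d * y" i] d m' by simp
  also have "\<dots> = d * (y * Sq m' y i - Rq m' y (Suc i))" using S R by (simp add: algebra_simps)
  also have "\<dots> = d * (m' * Sq m' y (Suc i))" using Sq_eq[OF m', of y i] by simp
  finally have "Sq (d * m') (d * y) (Suc i) = Sq m' y (Suc i)" using d m' by simp
  with R show ?case by simp
qed

lemma solve_digit:
  fixes m c r g :: int
  assumes m: "m \<noteq> 0" and c: "coprime c m" and g: "0 \<le> g" "g < \<bar>m\<bar>"
  shows "\<exists>t. (r + c * t) mod \<bar>m\<bar> = g"
proof -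
  obtain u v where uv: "u * c + v * m = 1" using bezout_int[of c m] c by auto
  have cu: "c * u = 1 - v * m" using uv by (simp add: algebra_simps)
  have "r + c * (u * (g - r)) = r + (c*u)*(g-r)" by (simp add: algebra_simps)
  also have "\<dots> = g + m * (- v * (g - r))" unfolding cu by (simp add: algebra_simps)
  finally have "r + c * (u * (g - r)) = g + m * (- v * (g - r))" .
  then have "(r + c * (u * (g - r))) mod \<bar>m\<bar> = g mod \<bar>m\<bar>"
    by (simp add: mod_eq_dvd_iff)
  then show ?thesis using g by auto
qed

lemma inj_digits:
  assumes m: "m \<noteq> 0" and c: "coprime x m"
  shows "(\<forall>j. 1 \<le> j \<and> j \<le> N \<longrightarrow> Rq m x j = Rq m x' j) \<Longrightarrow> \<bar>m\<bar>^N dvd x' - x"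
proof (induction N)
  case 0
  then show ?case by simp
next
  case (Suc N)
  then have "\<bar>m\<bar>^N dvd x' - x" by auto
  then obtain t where t: "x' = x + m^N * t"
    by (metis add_diff_cancel_left' diff_add_cancel dvd_def power_abs abs_dvd_iff)
  have "Rq m x (Suc N) = Rq m x' (Suc N)" using Suc.prems by auto
  also have "\<dots> = (Rq m x (Suc N) + x^N * t) mod \<bar>m\<bar>" using t key[OF m] by simp
  finally have "(Rq m x (Suc N) + x^N * t) mod \<bar>m\<bar> = Rq m x (Suc N) mod \<bar>m\<bar>"
    using Rq_range[OF m, of x "Suc N"] by simp
  then have "\<bar>m\<bar> dvd x^N * t" by (simp add: mod_eq_dvd_iff)
  then have "m dvd t" using c by (simp add: coprime_commute coprime_dvd_mult_right_iff)
  then have "m^N * m dvd m^N * t" by (rule mult_dvd_mono[OF dvd_refl])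
  then have "\<bar>m^N * m\<bar> dvd m^N * t" by (simp only: abs_dvd_iff)
  then have "\<bar>m\<bar>^Suc N dvd m^N * t" by (simp only: power_Suc2 power_abs abs_mult)
  then show ?case using t by simp
qed

lemma zm_range: "x \<in> zm m \<Longrightarrow> 0 \<le> x h \<and> x h < \<bar>m\<bar>^h"
  by (simp add: zm_def)

lemma zm_comp: assumes "x \<in> zm m" shows "h \<le> k \<Longrightarrow> x k mod \<bar>m\<bar>^h = x h"
proof (induction k)
  case 0
  then show ?case using zm_range[OF assms, of 0] by simp
next
  case (Suc k)
  show ?case
  proof (cases "h = Suc k")
    case True
    then show ?thesis using zm_range[OF assms, of h] by simp
  next
    case False
    then have hk: "h \<le> k" using Suc.prems by simp
    have "\<bar>m\<bar>^h dvd \<bar>m\<bar>^k" using hk by (simp add: le_imp_power_dvd)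
    then have "x (Suc k) mod \<bar>m\<bar>^h = (x (Suc k) mod \<bar>m\<bar>^k) mod \<bar>m\<bar>^h"
      by (simp add: mod_mod_cancel)
    also have "\<dots> = x k mod \<bar>m\<bar>^h" using assms by (simp add: zm_def)
    finally show ?thesis using Suc.IH hk by simp
  qed
qed

lemma zm_comp_dvd: "x \<in> zm m \<Longrightarrow> h \<le> k \<Longrightarrow> \<bar>m\<bar>^h dvd x k - x h"
  using zm_comp[of x m h k] by (metis mod_eq_dvd_iff zm_range mod_pos_pos_trivial)

lemma zm_eq:
  assumes "x \<in> zm m" "y \<in> zm m" "\<And>h. \<bar>m\<bar>^h dvd x h - y h"
  shows "x = y"
proof
  fix h
  have "x h mod \<bar>m\<bar>^h = y h mod \<bar>m\<bar>^h" using assms(3) by (simp add: mod_eq_dvd_iff)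
  then show "x h = y h" using zm_range[OF assms(1), of h] zm_range[OF assms(2), of h] by simp
qed

lemma zm_eq2:
  assumes "x \<in> zm m" "y \<in> zm m" "\<And>h. \<bar>m\<bar>^h dvd x (Suc h) - y (Suc h)"
  shows "x = y"
proof (rule zm_eq[OF assms(1,2)])
  fix h
  have e: "x h - y h = (x (Suc h) - y (Suc h)) - (x (Suc h) - x h) + (y (Suc h) - y h)"
    by simp
  have a: "\<bar>m\<bar>^h dvd x (Suc h) - y (Suc h)" by (rule assms(3))
  have b: "\<bar>m\<bar>^h dvd x (Suc h) - x h" using zm_comp_dvd[OF assms(1), of h "Suc h"] by simp
  have c: "\<bar>m\<bar>^h dvd y (Suc h) - y h" using zm_comp_dvd[OF assms(2), of h "Suc h"] by simp
  show "\<bar>m\<bar>^h dvd x h - y h"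
    unfolding e by (rule dvd_add[OF dvd_diff[OF a b] c])
qed

lemma pow_pos: "m \<noteq> (0::int) \<Longrightarrow> \<bar>m\<bar>^h > 0" by simp

lemma mod_suc_pow: "(a::int) mod \<bar>m\<bar>^Suc h mod \<bar>m\<bar>^h = a mod \<bar>m\<bar>^h"
  by (rule mod_mod_cancel, rule le_imp_power_dvd, simp)

lemma zm_add_in: assumes "m \<noteq> 0" "x \<in> zm m" "y \<in> zm m" shows "zm_add m x y \<in> zm m"
  unfolding zm_def zm_add_def
proof (intro CollectI allI conjI)
  fix h
  show "0 \<le> (x h + y h) mod \<bar>m\<bar> ^ h" "(x h + y h) mod \<bar>m\<bar> ^ h < \<bar>m\<bar> ^ h" using assms(1) by auto
  have "(x (Suc h) + y (Suc h)) mod \<bar>m\<bar>^Suc h mod \<bar>m\<bar>^h = (x (Suc h) + y (Suc h)) mod \<bar>m\<bar>^h"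
    by (rule mod_suc_pow)
  also have "\<dots> = (x (Suc h) mod \<bar>m\<bar>^h + y (Suc h) mod \<bar>m\<bar>^h) mod \<bar>m\<bar>^h"
    by (simp add: mod_simps)
  also have "\<dots> = (x h + y h) mod \<bar>m\<bar>^h" using assms(2,3) by (simp add: zm_def)
  finally show "(x (Suc h) + y (Suc h)) mod \<bar>m\<bar>^Suc h mod \<bar>m\<bar>^h = (x h + y h) mod \<bar>m\<bar>^h" .
qed

lemma zm_mul_in: assumes "m \<noteq> 0" "x \<in> zm m" "y \<in> zm m" shows "zm_mul m x y \<in> zm m"
  unfolding zm_def zm_mul_def
proof (intro CollectI allI conjI)
  fix h
  show "0 \<le> (x h * y h) mod \<bar>m\<bar> ^ h" "(x h * y h) mod \<bar>m\<bar> ^ h < \<bar>m\<bar> ^ h" using assms(1) by auto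
  have "(x (Suc h) * y (Suc h)) mod \<bar>m\<bar>^Suc h mod \<bar>m\<bar>^h = (x (Suc h) * y (Suc h)) mod \<bar>m\<bar>^h"
    by (rule mod_suc_pow)
  also have "\<dots> = (x (Suc h) mod \<bar>m\<bar>^h * (y (Suc h) mod \<bar>m\<bar>^h)) mod \<bar>m\<bar>^h"
    by (simp add: mod_simps)
  also have "\<dots> = (x h * y h) mod \<bar>m\<bar>^h" using assms(2,3) by (simp add: zm_def)
  finally show "(x (Suc h) * y (Suc h)) mod \<bar>m\<bar>^Suc h mod \<bar>m\<bar>^h = (x h * y h) mod \<bar>m\<bar>^h" .
qed

lemma zm_of_int_in: "m \<noteq> 0 \<Longrightarrow> zm_of_int m n \<in> zm m"
  unfolding zm_def zm_of_int_def
  by (auto simp: mod_mod_cancel le_imp_power_dvd)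

lemma modm: "(m * a + r) mod \<bar>m\<bar> = (r::int) mod \<bar>m\<bar>"
  by (simp add: mod_eq_dvd_iff)

definition sig :: "int \<Rightarrow> (nat \<Rightarrow> int) \<Rightarrow> nat \<Rightarrow> (nat \<Rightarrow> int)" where
  "sig m \<xi> i = (\<lambda>h. Sq m (\<xi> (h + i)) i mod \<bar>m\<bar>^h)"

lemma sig_cong:
  assumes m: "m \<noteq> 0" and x: "\<xi> \<in> zm m" and hk: "h + i \<le> k"
  shows "\<bar>m\<bar>^h dvd Sq m (\<xi> k) i - Sq m (\<xi> (h + i)) i"
proof -
  have "\<bar>m\<bar>^(h+i) dvd \<xi> k - \<xi> (h + i)" using zm_comp_dvd[OF x hk] .
  from dep[OF m this, of i] show ?thesis by simp
qed

lemma sig_in: assumes m: "m \<noteq> 0" and x: "\<xi> \<in> zm m" shows "sig m \<xi> i \<in> zm m"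
  unfolding zm_def sig_def
proof (intro CollectI allI conjI)
  fix h
  show "0 \<le> Sq m (\<xi> (h + i)) i mod \<bar>m\<bar> ^ h" "Sq m (\<xi> (h + i)) i mod \<bar>m\<bar> ^ h < \<bar>m\<bar> ^ h"
    using m by auto
  have "Sq m (\<xi> (Suc h + i)) i mod \<bar>m\<bar> ^ Suc h mod \<bar>m\<bar> ^ h = Sq m (\<xi> (Suc h + i)) i mod \<bar>m\<bar> ^ h"
    by (rule mod_suc_pow)
  also have "\<dots> = Sq m (\<xi> (h + i)) i mod \<bar>m\<bar> ^ h"
    using sig_cong[OF m x, of h i "Suc h + i"] by (simp add: mod_eq_dvd_iff)
  finally show "Sq m (\<xi> (Suc h + i)) i mod \<bar>m\<bar> ^ Suc h mod \<bar>m\<bar> ^ h = Sq m (\<xi> (h + i)) i mod \<bar>m\<bar> ^ h" .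
qed

lemma Rq_stable:
  assumes m: "m \<noteq> 0" and x: "\<xi> \<in> zm m" and ik: "i \<le> k"
  shows "Rq m (\<xi> k) i = Rq m (\<xi> i) i"
  using dep[OF m zm_comp_dvd[OF x ik], of i] by simp

lemma zm_rs_eq:
  assumes m: "m \<noteq> 0" and x: "\<xi> \<in> zm m"
  shows "zm_rs m \<xi> i = (Rq m (\<xi> i) i, sig m \<xi> i)"
proof (induction i)
  case 0
  show ?case by (simp add: sig_def zm_of_int_def)
next
  case (Suc i)
  let ?P = "\<lambda>p. 0 \<le> fst p \<and> fst p < \<bar>m\<bar> \<and> snd p \<in> zm m \<and>
      zm_mul m \<xi> (snd (zm_rs m \<xi> i)) = zm_add m (zm_mul m (zm_of_int m m) (snd p)) (zm_of_int m (fst p))"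
  have E: "zm_mul m \<xi> (sig m \<xi> i) h = (m * Sq m (\<xi> (h + Suc i)) (Suc i) + Rq m (\<xi> (Suc i)) (Suc i)) mod \<bar>m\<bar>^h" for h
  proof -
    define x where "x = \<xi> (h + Suc i)"
    have R: "Rq m x (Suc i) = Rq m (\<xi> (Suc i)) (Suc i)" unfolding x_def by (rule Rq_stable[OF m x]) simp
    have c1: "\<bar>m\<bar>^h dvd x - \<xi> h" unfolding x_def by (rule zm_comp_dvd[OF x]) simp
    have c2: "\<bar>m\<bar>^h dvd Sq m x i - Sq m (\<xi> (h + i)) i" unfolding x_def by (rule sig_cong[OF m x]) simp
    have "zm_mul m \<xi> (sig m \<xi> i) h = (\<xi> h * Sq m (\<xi> (h + i)) i) mod \<bar>m\<bar>^h"
      by (simp add: zm_mul_def sig_def mod_simps)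
    also have "\<dots> = (x * Sq m x i) mod \<bar>m\<bar>^h"
    proof -
      have "x * Sq m x i - \<xi> h * Sq m (\<xi> (h + i)) i = (x - \<xi> h) * Sq m x i + \<xi> h * (Sq m x i - Sq m (\<xi> (h + i)) i)"
        by (simp add: algebra_simps)
      moreover have "\<bar>m\<bar>^h dvd (x - \<xi> h) * Sq m x i + \<xi> h * (Sq m x i - Sq m (\<xi> (h + i)) i)"
        using c1 c2 by (simp add: dvd_add)
      ultimately have "\<bar>m\<bar>^h dvd x * Sq m x i - \<xi> h * Sq m (\<xi> (h + i)) i" by simp
      then have "(x * Sq m x i) mod \<bar>m\<bar>^h = (\<xi> h * Sq m (\<xi> (h + i)) i) mod \<bar>m\<bar>^h"
        by (simp only: mod_eq_dvd_iff)
      then show ?thesis by simp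
    qed
    also have "\<dots> = (m * Sq m x (Suc i) + Rq m x (Suc i)) mod \<bar>m\<bar>^h"
      using Sq_eq[OF m, of x i] by simp
    finally show ?thesis using R x_def by simp
  qed
  have Pa: "?P (Rq m (\<xi> (Suc i)) (Suc i), sig m \<xi> (Suc i))"
  proof (intro conjI)
    show "0 \<le> fst (Rq m (\<xi> (Suc i)) (Suc i), sig m \<xi> (Suc i))"
      "fst (Rq m (\<xi> (Suc i)) (Suc i), sig m \<xi> (Suc i)) < \<bar>m\<bar>"
      using Rq_range[OF m] by auto
    show "snd (Rq m (\<xi> (Suc i)) (Suc i), sig m \<xi> (Suc i)) \<in> zm m" using sig_in[OF m x] by simp
    show "zm_mul m \<xi> (snd (zm_rs m \<xi> i)) = zm_add m (zm_mul m (zm_of_int m m) (snd (Rq m (\<xi> (Suc i)) (Suc i), sig m \<xi> (Suc i))))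
          (zm_of_int m (fst (Rq m (\<xi> (Suc i)) (Suc i), sig m \<xi> (Suc i))))"
    proof
      fix h
      show "zm_mul m \<xi> (snd (zm_rs m \<xi> i)) h = zm_add m (zm_mul m (zm_of_int m m) (snd (Rq m (\<xi> (Suc i)) (Suc i), sig m \<xi> (Suc i))))
          (zm_of_int m (fst (Rq m (\<xi> (Suc i)) (Suc i), sig m \<xi> (Suc i)))) h"
        using E[of h] Suc.IH by (simp add: zm_add_def zm_mul_def zm_of_int_def sig_def mod_simps add.commute)
    qed
  qed
  have Pu: "p = (Rq m (\<xi> (Suc i)) (Suc i), sig m \<xi> (Suc i))" if Pp: "?P p" for p
  proof -
    obtain r s where p: "p = (r, s)" by fastforce
    have r: "0 \<le> r" "r < \<bar>m\<bar>" and s: "s \<in> zm m"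
      and eq: "zm_mul m \<xi> (sig m \<xi> i) = zm_add m (zm_mul m (zm_of_int m m) s) (zm_of_int m r)"
      using Pp Suc.IH p by auto
    have C: "(m * s h + r) mod \<bar>m\<bar>^h = (m * Sq m (\<xi> (h + Suc i)) (Suc i) + Rq m (\<xi> (Suc i)) (Suc i)) mod \<bar>m\<bar>^h" for h
      using fun_cong[OF eq, of h] E[of h] by (simp add: zm_add_def zm_mul_def zm_of_int_def mod_simps)
    have "r mod \<bar>m\<bar> = Rq m (\<xi> (Suc i)) (Suc i) mod \<bar>m\<bar>"
      using C[of 1] by (simp add: modm)
    then have rr: "r = Rq m (\<xi> (Suc i)) (Suc i)" using r Rq_range[OF m, of "\<xi> (Suc i)" "Suc i"] by simp
    have "s = sig m \<xi> (Suc i)"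
    proof (rule zm_eq2[OF s sig_in[OF m x]])
      fix h
      have "\<bar>m\<bar>^Suc h dvd m * s (Suc h) - m * Sq m (\<xi> (Suc h + Suc i)) (Suc i)"
        using C[of "Suc h"] rr by (simp add: mod_eq_dvd_iff)
      then have "\<bar>m\<bar> * \<bar>m\<bar>^h dvd m * (s (Suc h) - Sq m (\<xi> (Suc h + Suc i)) (Suc i))"
        by (simp add: algebra_simps)
      then have d1: "\<bar>m\<bar>^h dvd s (Suc h) - Sq m (\<xi> (Suc h + Suc i)) (Suc i)"
        using absdvd_cancel m by blast
      have d2: "\<bar>m\<bar>^h dvd Sq m (\<xi> (Suc h + Suc i)) (Suc i) - sig m \<xi> (Suc i) (Suc h)"
        unfolding sig_def by (metis mod_mod_trivial mod_eq_dvd_iff mod_suc_pow)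
      have "s (Suc h) - sig m \<xi> (Suc i) (Suc h) = (s (Suc h) - Sq m (\<xi> (Suc h + Suc i)) (Suc i)) + (Sq m (\<xi> (Suc h + Suc i)) (Suc i) - sig m \<xi> (Suc i) (Suc h))"
        by simp
      then show "\<bar>m\<bar>^h dvd s (Suc h) - sig m \<xi> (Suc i) (Suc h)"
        using dvd_add[OF d1 d2] by simp
    qed
    with rr p show ?thesis by simp
  qed
  show ?case
    unfolding zm_rs.simps by (rule the_equality[of ?P, OF Pa Pu])
qed

lemma zm_r_eq: "m \<noteq> 0 \<Longrightarrow> \<xi> \<in> zm m \<Longrightarrow> zm_r m i \<xi> = Rq m (\<xi> i) i"
  by (simp add: zm_r_def zm_rs_eq)

lemma zm_add_app: "zm_add m x y h = (x h + y h) mod \<bar>m\<bar>^h" by (simp add: zm_add_def)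
lemma zm_mul_app: "zm_mul m x y h = (x h * y h) mod \<bar>m\<bar>^h" by (simp add: zm_mul_def)
lemma zm_of_int_app: "zm_of_int m n h = n mod \<bar>m\<bar>^h" by (simp add: zm_of_int_def)

lemmas zm_apps = zm_add_app zm_mul_app zm_of_int_app

lemma zm_eqk:
  assumes "x \<in> zm m" "y \<in> zm m" "\<And>h. \<bar>m\<bar>^h dvd x (h + k) - y (h + k)"
  shows "x = y"
proof (rule zm_eq[OF assms(1,2)])
  fix h
  have e: "x h - y h = (x (h + k) - y (h + k)) - (x (h + k) - x h) + (y (h + k) - y h)"
    by simp
  have a: "\<bar>m\<bar>^h dvd x (h + k) - y (h + k)" by (rule assms(3))
  have b: "\<bar>m\<bar>^h dvd x (h + k) - x h" using zm_comp_dvd[OF assms(1), of h "h + k"] by simp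
  have c: "\<bar>m\<bar>^h dvd y (h + k) - y h" using zm_comp_dvd[OF assms(2), of h "h + k"] by simp
  show "\<bar>m\<bar>^h dvd x h - y h"
    unfolding e by (rule dvd_add[OF dvd_diff[OF a b] c])
qed

lemma dvd_pow_exists:
  fixes d m :: int
  assumes "d > 0" "\<forall>p::int. prime p \<longrightarrow> p dvd d \<longrightarrow> p dvd m"
  shows "\<exists>k. d dvd m^k"
  using assms
proof (induction "nat d" arbitrary: d rule: less_induct)
  case less
  show ?case
  proof (cases "d = 1")
    case True
    then show ?thesis by (intro exI[of _ 0]) simp
  next
    case False
    then have "\<bar>d\<bar> \<noteq> 1" using less.prems by simp
    then obtain p where p: "prime p" "p dvd d" using prime_factor_int by blast
    then obtain e where e: "d = p * e" by (auto elim: dvdE)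
    have p1: "p > 1" using prime_gt_1_int p by blast
    have epos: "e > 0" using less.prems(1) e p1 by (smt (verit) mult_le_0_iff)
    have "e < d" using e p1 epos by (smt (verit) mult_less_cancel_right1)
    then have lt: "nat e < nat d" using epos by simp
    have "\<forall>q::int. prime q \<longrightarrow> q dvd e \<longrightarrow> q dvd m" using less.prems(2) e by (metis dvd_mult)
    then obtain k where k: "e dvd m^k" using less.hyps[OF lt] epos by blast
    have "p dvd m" using less.prems(2) p by blast
    then have "p * e dvd m * m^k" using k by (rule mult_dvd_mono)
    then show ?thesis using e by (intro exI[of _ "Suc k"]) simp
  qed
qed

lemma dvd_abspow: "(d::int) dvd m^k \<Longrightarrow> d dvd \<bar>m\<bar>^k"
  by (simp add: power_abs[symmetric])

lemma decomp:
  assumes m: "m \<noteq> 0" and x: "\<xi> \<in> zm m"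
  shows "\<bar>m\<bar>^h dvd \<xi> h - (m * sig m \<xi> 1 h + \<xi> 1)"
proof -
  define y where "y = \<xi> (h + 1)"
  have e: "m * Sq m y 1 = y - y mod \<bar>m\<bar>"
    using Sq_eq[OF m, of y 0] by (simp add: Rq.simps)
  have y1: "y mod \<bar>m\<bar> = \<xi> 1" unfolding y_def using zm_comp[OF x, of 1 "h+1"] by simp
  have c1: "\<bar>m\<bar>^h dvd y - \<xi> h" unfolding y_def by (rule zm_comp_dvd[OF x]) simp
  have c2: "\<bar>m\<bar>^h dvd Sq m y 1 - sig m \<xi> 1 h" unfolding sig_def y_def
    by (simp add: mod_eq_dvd_iff[symmetric])
  have e2: "\<xi> h - (m * sig m \<xi> 1 h + \<xi> 1) = m * (Sq m y 1 - sig m \<xi> 1 h) - (y - \<xi> h)"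
    using e y1 by (simp add: algebra_simps)
  show ?thesis unfolding e2 by (rule dvd_diff[OF dvd_mult[OF c2] c1])
qed

definition Iset :: "int \<Rightarrow> (nat \<Rightarrow> int) \<Rightarrow> (nat \<Rightarrow> int) set" where
  "Iset m \<xi> = {zm_add m (zm_mul m (zm_of_int m m) a) (zm_mul m \<xi> b) | a b. a \<in> zm m \<and> b \<in> zm m}"

lemma ideal_eq:
  assumes m: "m \<noteq> 0" and x: "\<xi> \<in> zm m"
  shows "Iset m \<xi> = zm_ideal m (zm_of_int m (gcd m (\<xi> 1)))"
proof -
  define d where "d = gcd m (\<xi> 1)"
  define \<sigma> where "\<sigma> = sig m \<xi> 1"
  have sz: "\<sigma> \<in> zm m" unfolding \<sigma>_def by (rule sig_in[OF m x])
  have dm: "d * (m div d) = m" unfolding d_def by simp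
  have dr: "d * (\<xi> 1 div d) = \<xi> 1" unfolding d_def by simp
  have dec: "\<bar>m\<bar>^h dvd \<xi> h - (m * \<sigma> h + \<xi> 1)" for h unfolding \<sigma>_def by (rule decomp[OF m x])
  have "Iset m \<xi> = zm_ideal m (zm_of_int m d)"
  proof
    show "Iset m \<xi> \<subseteq> zm_ideal m (zm_of_int m d)"
    proof
      fix z assume "z \<in> Iset m \<xi>"
      then obtain a b where ab: "a \<in> zm m" "b \<in> zm m" and z: "z = zm_add m (zm_mul m (zm_of_int m m) a) (zm_mul m \<xi> b)"
        unfolding Iset_def by auto
      define c where "c = zm_add m (zm_mul m (zm_of_int m (m div d)) a) (zm_mul m (zm_add m (zm_mul m (zm_of_int m (m div d)) \<sigma>) (zm_of_int m (\<xi> 1 div d))) b)"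
      have cz: "c \<in> zm m" unfolding c_def using m ab sz
        by (intro zm_add_in zm_mul_in zm_of_int_in) auto
      have "z = zm_mul m (zm_of_int m d) c"
      proof
        fix h
        have "zm_mul m (zm_of_int m d) c h = (d * ((m div d) * a h + ((m div d) * \<sigma> h + \<xi> 1 div d) * b h)) mod \<bar>m\<bar>^h"
          unfolding c_def by (simp add: zm_apps mod_simps)
        also have "d * ((m div d) * a h + ((m div d) * \<sigma> h + \<xi> 1 div d) * b h) = (d * (m div d)) * a h + ((d * (m div d)) * \<sigma> h + d * (\<xi> 1 div d)) * b h"
          by (simp add: algebra_simps)
        also have "\<dots> = m * a h + (m * \<sigma> h + \<xi> 1) * b h"
          by (simp only: dm dr)
        finally have 1: "zm_mul m (zm_of_int m d) c h = (m * a h + (m * \<sigma> h + \<xi> 1) * b h) mod \<bar>m\<bar>^h" .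
        have 2: "z h = (m * a h + \<xi> h * b h) mod \<bar>m\<bar>^h"
          unfolding z by (simp add: zm_apps mod_simps)
        have "(m * a h + \<xi> h * b h) - (m * a h + (m * \<sigma> h + \<xi> 1) * b h) = (\<xi> h - (m * \<sigma> h + \<xi> 1)) * b h"
          by (simp add: algebra_simps)
        then have "\<bar>m\<bar>^h dvd (m * a h + \<xi> h * b h) - (m * a h + (m * \<sigma> h + \<xi> 1) * b h)"
          using dec[of h] by simp
        then show "z h = zm_mul m (zm_of_int m d) c h" unfolding 1 2 by (simp add: mod_eq_dvd_iff)
      qed
      then show "z \<in> zm_ideal m (zm_of_int m d)" unfolding zm_ideal_def using cz by blast
    qed
  next
    show "zm_ideal m (zm_of_int m d) \<subseteq> Iset m \<xi>"
    proof
      fix z assume "z \<in> zm_ideal m (zm_of_int m d)"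
      then obtain c where cz: "c \<in> zm m" and z: "z = zm_mul m (zm_of_int m d) c"
        unfolding zm_ideal_def by auto
      obtain u v where uv: "u * m + v * \<xi> 1 = d" unfolding d_def using bezout_int by blast
      define a where "a = zm_mul m (zm_add m (zm_of_int m u) (zm_mul m (zm_of_int m (- v)) \<sigma>)) c"
      define b where "b = zm_mul m (zm_of_int m v) c"
      have az: "a \<in> zm m" unfolding a_def using m cz sz
        by (intro zm_add_in zm_mul_in zm_of_int_in) auto
      have bz: "b \<in> zm m" unfolding b_def using m cz
        by (intro zm_add_in zm_mul_in zm_of_int_in) auto
      have "z = zm_add m (zm_mul m (zm_of_int m m) a) (zm_mul m \<xi> b)"
      proof
        fix h
        have 1: "zm_add m (zm_mul m (zm_of_int m m) a) (zm_mul m \<xi> b) h = (m * ((u + (- v) * \<sigma> h) * c h) + \<xi> h * (v * c h)) mod \<bar>m\<bar>^h"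
          unfolding a_def b_def by (simp add: zm_apps mod_simps)
        have 2: "z h = (d * c h) mod \<bar>m\<bar>^h"
          unfolding z by (simp add: zm_apps mod_simps)
        have "(m * ((u + (- v) * \<sigma> h) * c h) + \<xi> h * (v * c h)) - d * c h = (\<xi> h - (m * \<sigma> h + \<xi> 1)) * (v * c h)"
          unfolding uv[symmetric] by (simp add: algebra_simps)
        then have "\<bar>m\<bar>^h dvd (m * ((u + (- v) * \<sigma> h) * c h) + \<xi> h * (v * c h)) - d * c h"
          using dec[of h] by simp
        then have "(m * ((u + (- v) * \<sigma> h) * c h) + \<xi> h * (v * c h)) mod \<bar>m\<bar>^h = (d * c h) mod \<bar>m\<bar>^h"
          by (simp only: mod_eq_dvd_iff)
        then show "z h = zm_add m (zm_mul m (zm_of_int m m) a) (zm_mul m \<xi> b) h"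
          unfolding 1 2 by simp
      qed
      then show "z \<in> Iset m \<xi>" unfolding Iset_def using az bz by blast
    qed
  qed
  then show ?thesis unfolding d_def .
qed

lemma ideal_dvd:
  assumes m: "m \<noteq> 0" and k: "d' dvd m^k" and mem: "zm_of_int m d \<in> zm_ideal m (zm_of_int m d')"
  shows "d' dvd d"
proof -
  obtain c where c: "zm_of_int m d = zm_mul m (zm_of_int m d') c" using mem unfolding zm_ideal_def by auto
  have "d mod \<bar>m\<bar>^k = (d' * c k) mod \<bar>m\<bar>^k" using fun_cong[OF c, of k] by (simp add: zm_apps mod_simps)
  then have "\<bar>m\<bar>^k dvd d - d' * c k" by (simp add: mod_eq_dvd_iff)
  then have "d' dvd d - d' * c k" using dvd_abspow[OF k] dvd_trans by blast
  then show ?thesis by (metis dvd_add dvd_triv_left diff_add_cancel)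
qed

lemma self_in_ideal: "m \<noteq> 0 \<Longrightarrow> zm_of_int m d \<in> zm_ideal m (zm_of_int m d)"
  unfolding zm_ideal_def
  by (rule CollectI, rule exI[of _ "zm_of_int m 1"]) (auto simp: zm_of_int_in zm_apps mod_simps)

lemma zm_gcd_eq:
  assumes m: "m \<noteq> 0" and x: "\<xi> \<in> zm m"
  shows "zm_gcd m m \<xi> = gcd m (\<xi> 1)"
proof -
  define d where "d = gcd m (\<xi> 1)"
  let ?P = "\<lambda>d::int. d > 0 \<and> (\<forall>p::int. prime p \<longrightarrow> p dvd d \<longrightarrow> p dvd m) \<and>
     {zm_add m (zm_mul m (zm_of_int m m) a) (zm_mul m \<xi> b) | a b. a \<in> zm m \<and> b \<in> zm m}
       = zm_ideal m (zm_of_int m d)"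
  have I: "{zm_add m (zm_mul m (zm_of_int m m) a) (zm_mul m \<xi> b) | a b. a \<in> zm m \<and> b \<in> zm m} = zm_ideal m (zm_of_int m d)"
    using ideal_eq[OF m x] unfolding Iset_def d_def .
  have Pd: "?P d" using I m unfolding d_def by auto
  have "d' = d" if "?P d'" for d'
  proof -
    have d'p: "d' > 0" and pr: "\<forall>p::int. prime p \<longrightarrow> p dvd d' \<longrightarrow> p dvd m"
      and eq: "zm_ideal m (zm_of_int m d') = zm_ideal m (zm_of_int m d)"
      using that I by auto
    have prd: "\<forall>p::int. prime p \<longrightarrow> p dvd d \<longrightarrow> p dvd m" using Pd by blast
    have dpos: "d > 0" using Pd by blast
    obtain k where k: "d' dvd m^k" using dvd_pow_exists[OF d'p pr] by blast
    obtain k' where k': "d dvd m^k'" using dvd_pow_exists[OF dpos prd] by blast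
    have "d' dvd d" using ideal_dvd[OF m k] self_in_ideal[OF m, of d] eq by simp
    moreover have "d dvd d'" using ideal_dvd[OF m k'] self_in_ideal[OF m, of d'] eq by simp
    ultimately show ?thesis using d'p dpos by (simp add: zdvd_antisym_nonneg)
  qed
  then have "zm_gcd m m \<xi> = d" unfolding zm_gcd_def using Pd by (intro the_equality) auto
  then show ?thesis unfolding d_def .
qed

lemma gcd_dvd_pow:
  fixes m a :: int
  assumes m: "m \<noteq> 0"
  shows "\<exists>k. gcd m a dvd m^k"
proof -
  have "gcd m a > 0" using m by simp
  moreover have "\<forall>p::int. prime p \<longrightarrow> p dvd gcd m a \<longrightarrow> p dvd m" by auto
  ultimately show ?thesis by (rule dvd_pow_exists)
qed

lemma cancel_d:
  assumes m: "m \<noteq> 0" and k: "d dvd m^k" and d: "d \<noteq> 0" and c: "c \<in> zm m" and c': "c' \<in> zm m"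
    and eq: "zm_mul m (zm_of_int m d) c = zm_mul m (zm_of_int m d) c'"
  shows "c = c'"
proof (rule zm_eqk[OF c c', of k])
  fix h
  have "(d * c (h + k)) mod \<bar>m\<bar>^(h+k) = (d * c' (h + k)) mod \<bar>m\<bar>^(h+k)"
    using fun_cong[OF eq, of "h + k"] by (simp add: zm_apps mod_simps)
  then have 1: "\<bar>m\<bar>^(h+k) dvd d * (c (h + k) - c' (h + k))"
    by (simp add: mod_eq_dvd_iff right_diff_distrib)
  obtain q where q: "\<bar>m\<bar>^k = d * q" using dvd_abspow[OF k] by (auto elim: dvdE)
  have "d * \<bar>m\<bar>^h dvd \<bar>m\<bar>^(h+k)" unfolding power_add q by (simp add: mult.commute mult.left_commute)
  from dvd_trans[OF this 1] show "\<bar>m\<bar>^h dvd c (h + k) - c' (h + k)" using d by simp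
qed

lemma zm_div_prop:
  assumes m: "m \<noteq> 0" and x: "\<xi> \<in> zm m"
  shows "zm_div m \<xi> (gcd m (\<xi> 1)) \<in> zm m \<and> zm_mul m (zm_of_int m (gcd m (\<xi> 1))) (zm_div m \<xi> (gcd m (\<xi> 1))) = \<xi>"
proof -
  define d where "d = gcd m (\<xi> 1)"
  have "\<xi> \<in> Iset m \<xi>"
  proof -
    have "\<xi> = zm_add m (zm_mul m (zm_of_int m m) (zm_of_int m 0)) (zm_mul m \<xi> (zm_of_int m 1))"
    proof
      fix h show "\<xi> h = zm_add m (zm_mul m (zm_of_int m m) (zm_of_int m 0)) (zm_mul m \<xi> (zm_of_int m 1)) h"
        using zm_range[OF x, of h] by (simp add: zm_apps mod_simps)
    qed
    then show ?thesis unfolding Iset_def using zm_of_int_in[OF m] by blast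
  qed
  then obtain c where c: "c \<in> zm m" "\<xi> = zm_mul m (zm_of_int m d) c"
    using ideal_eq[OF m x] unfolding zm_ideal_def d_def by auto
  obtain k where k: "d dvd m^k" using gcd_dvd_pow[OF m] unfolding d_def by blast
  have d0: "d \<noteq> 0" using m unfolding d_def by simp
  have ex: "\<exists>!\<eta>. \<eta> \<in> zm m \<and> zm_mul m (zm_of_int m d) \<eta> = \<xi>"
    using c cancel_d[OF m k d0] by metis
  show ?thesis unfolding zm_div_def d_def[symmetric] using theI'[OF ex] .
qed

lemma Rq1: "m \<noteq> 0 \<Longrightarrow> \<xi> \<in> zm m \<Longrightarrow> Rq m (\<xi> 1) 1 = \<xi> 1"
  using zm_range[of \<xi> m 1] by (simp add: Rq.simps)

lemma gcd_stable:
  assumes m: "m \<noteq> 0" and x: "\<xi> \<in> zm m" and h: "h \<ge> 1"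
  shows "gcd m (\<xi> h) = gcd m (\<xi> 1)"
proof -
  have "\<bar>m\<bar>^1 dvd \<xi> h - \<xi> 1" by (rule zm_comp_dvd[OF x h])
  then have "m dvd \<xi> h - \<xi> 1" by simp
  then obtain q where q: "\<xi> h - \<xi> 1 = m * q" by (auto elim: dvdE)
  then have "\<xi> h = q * m + \<xi> 1" by (simp add: algebra_simps)
  then show ?thesis by (simp only: gcd_add_mult)
qed

lemma part_a_setup:
  assumes m: "m \<noteq> 0" and x: "\<xi> \<in> zm m" and h: "h \<ge> 1"
  defines "d \<equiv> gcd m (\<xi> 1)"
  shows "d dvd \<xi> h" "\<bar>m\<bar>^h dvd \<xi> h - d * zm_div m \<xi> d h"
    "coprime (\<xi> h div d) (m div d)"
    "d * \<bar>m div d\<bar>^h dvd \<bar>m\<bar>^h"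
proof -
  have d0: "d > 0" unfolding d_def using m by simp
  have dm: "m = d * (m div d)" unfolding d_def by simp
  have P: "zm_mul m (zm_of_int m d) (zm_div m \<xi> d) = \<xi>" using zm_div_prop[OF m x] unfolding d_def by blast
  have "\<xi> h = (d * zm_div m \<xi> d h) mod \<bar>m\<bar>^h"
    using fun_cong[OF P, of h] by (simp add: zm_apps mod_simps)
  then have "\<xi> h mod \<bar>m\<bar>^h = (d * zm_div m \<xi> d h) mod \<bar>m\<bar>^h" by simp
  then show c: "\<bar>m\<bar>^h dvd \<xi> h - d * zm_div m \<xi> d h" by (simp only: mod_eq_dvd_iff)
  obtain h' where h': "h = Suc h'" using h by (cases h) auto
  have "d dvd m" unfolding d_def by simp
  then have "d dvd m^h" unfolding h' by (simp add: dvd_mult2)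
  then have "d dvd \<bar>m\<bar>^h" by (rule dvd_abspow)
  then have "d dvd \<xi> h - d * zm_div m \<xi> d h" using c dvd_trans by blast
  then have "d dvd (\<xi> h - d * zm_div m \<xi> d h) + d * zm_div m \<xi> d h" by (rule dvd_add) simp
  then show dx: "d dvd \<xi> h" by simp
  have "gcd m (\<xi> h) = d" using gcd_stable[OF m x h] unfolding d_def by simp
  moreover have "gcd m (\<xi> h) = gcd (d * (m div d)) (d * (\<xi> h div d))" using dx dm by simp
  moreover have "\<dots> = d * gcd (m div d) (\<xi> h div d)" using d0 by (simp add: gcd_mult_distrib_int[symmetric])
  ultimately have "gcd (m div d) (\<xi> h div d) = 1" using d0 by simp
  then show "coprime (\<xi> h div d) (m div d)" by (simp add: coprime_iff_gcd_eq_1 gcd.commute)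
  have "\<bar>m\<bar> = d * \<bar>m div d\<bar>" using d0 by (subst dm) (simp add: abs_mult)
  then have "\<bar>m\<bar>^h = d^h * \<bar>m div d\<bar>^h" by (simp add: power_mult_distrib)
  also have "\<dots> = (d * \<bar>m div d\<bar>^h) * d^h'" unfolding h' by (simp add: algebra_simps)
  finally show "d * \<bar>m div d\<bar>^h dvd \<bar>m\<bar>^h" by simp
qed

lemma part_a:
  assumes m: "m \<noteq> 0" and x: "\<xi> \<in> zm m" and x': "\<xi>' \<in> zm m"
  shows "(\<exists>d::int. d > 0 \<and> zm_gcd m m \<xi> = d \<and> zm_gcd m m \<xi>' = d \<and>
               zm_proj (m div d) (zm_div m \<xi> d) = zm_proj (m div d) (zm_div m \<xi>' d))
            \<longleftrightarrow> (\<forall>i\<ge>1. zm_r m i \<xi> = zm_r m i \<xi>')"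
proof -
  define d where "d = gcd m (\<xi> 1)"
  have d0: "d > 0" unfolding d_def using m by simp
  have dd: "gcd m (\<xi> 1) = d" unfolding d_def by simp
  have dm: "m = d * (m div d)" unfolding d_def by simp
  define m' where "m' = m div d"
  have m'0: "m' \<noteq> 0" using dm m unfolding m'_def by auto
  have dmm: "m = d * m'" using dm unfolding m'_def .
  have C: "\<bar>m'\<bar>^h dvd zm_div m \<xi> d h - zm_div m \<xi>' d h \<longleftrightarrow> d * \<bar>m'\<bar>^h dvd \<xi> h - \<xi>' h"
    if same: "gcd m (\<xi>' 1) = d" and h: "h \<ge> 1" for h
  proof -
    note s = part_a_setup[OF m x h, folded d_def m'_def]
    note s' = part_a_setup[OF m x' h, unfolded same, folded m'_def]
    let ?e = "zm_div m \<xi> d h" and ?e' = "zm_div m \<xi>' d h"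
    have "\<bar>m\<bar>^h dvd (\<xi> h - d * ?e) - (\<xi>' h - d * ?e')" using s(2) s'(2) by (rule dvd_diff)
    then have A: "d * \<bar>m'\<bar>^h dvd (\<xi> h - \<xi>' h) - d * (?e - ?e')"
      using s(4) dvd_trans by (simp add: algebra_simps) blast
    have "d * \<bar>m'\<bar>^h dvd \<xi> h - \<xi>' h \<longleftrightarrow> d * \<bar>m'\<bar>^h dvd d * (?e - ?e')"
    proof
      assume "d * \<bar>m'\<bar>^h dvd \<xi> h - \<xi>' h"
      then have "d * \<bar>m'\<bar>^h dvd (\<xi> h - \<xi>' h) - ((\<xi> h - \<xi>' h) - d * (?e - ?e'))" using A by (rule dvd_diff)
      then show "d * \<bar>m'\<bar>^h dvd d * (?e - ?e')" by simp
    next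
      assume "d * \<bar>m'\<bar>^h dvd d * (?e - ?e')"
      then have "d * \<bar>m'\<bar>^h dvd ((\<xi> h - \<xi>' h) - d * (?e - ?e')) + d * (?e - ?e')" using A by (rule dvd_add[rotated])
      then show "d * \<bar>m'\<bar>^h dvd \<xi> h - \<xi>' h" by simp
    qed
    also have "\<dots> \<longleftrightarrow> \<bar>m'\<bar>^h dvd ?e - ?e'" using d0 by simp
    finally show ?thesis by simp
  qed
  have D: "Rq m (\<zeta> h) j = d * Rq m' (\<zeta> h div d) j"
    if z: "\<zeta> \<in> zm m" and same: "gcd m (\<zeta> 1) = d" and h: "h \<ge> 1" for \<zeta> h j
  proof -
    have "d dvd \<zeta> h" using part_a_setup(1)[OF m z h] same by simp
    then have "\<zeta> h = d * (\<zeta> h div d)" by simp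
    then have "Rq m (\<zeta> h) j = Rq (d * m') (d * (\<zeta> h div d)) j" using dmm by simp
    also have "\<dots> = d * Rq m' (\<zeta> h div d) j" using scale[OF d0 m'0] by blast
    finally show ?thesis .
  qed
  have Y: "\<zeta> h - \<zeta>' h = d * (\<zeta> h div d - \<zeta>' h div d)"
    if z: "\<zeta> \<in> zm m" "gcd m (\<zeta> 1) = d" and z': "\<zeta>' \<in> zm m" "gcd m (\<zeta>' 1) = d" and h: "h \<ge> 1" for \<zeta> \<zeta>' h
  proof -
    have "d dvd \<zeta> h" using part_a_setup(1)[OF m z(1) h] z(2) by simp
    moreover have "d dvd \<zeta>' h" using part_a_setup(1)[OF m z'(1) h] z'(2) by simp
    ultimately show ?thesis by (simp add: right_diff_distrib)
  qed
  show ?thesis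
  proof
    assume "\<exists>d. d > 0 \<and> zm_gcd m m \<xi> = d \<and> zm_gcd m m \<xi>' = d \<and>
               zm_proj (m div d) (zm_div m \<xi> d) = zm_proj (m div d) (zm_div m \<xi>' d)"
    then have same: "gcd m (\<xi>' 1) = d"
      and pr: "zm_proj m' (zm_div m \<xi> d) = zm_proj m' (zm_div m \<xi>' d)"
      using zm_gcd_eq[OF m x] zm_gcd_eq[OF m x'] unfolding d_def m'_def by auto
    show "\<forall>i\<ge>1. zm_r m i \<xi> = zm_r m i \<xi>'"
    proof (intro allI impI)
      fix i :: nat assume i: "i \<ge> 1"
      have "zm_div m \<xi> d i mod \<bar>m'\<bar>^i = zm_div m \<xi>' d i mod \<bar>m'\<bar>^i"
        using fun_cong[OF pr, of i] by (simp add: zm_proj_def)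
      then have "\<bar>m'\<bar>^i dvd zm_div m \<xi> d i - zm_div m \<xi>' d i" by (simp only: mod_eq_dvd_iff)
      then have "d * \<bar>m'\<bar>^i dvd \<xi> i - \<xi>' i" using C[OF same i] by simp
      then have "d * \<bar>m'\<bar>^i dvd d * (\<xi> i div d - \<xi>' i div d)"
        using Y[OF x dd x' same i] by simp
      then have "\<bar>m'\<bar>^i dvd \<xi> i div d - \<xi>' i div d" using d0 by simp
      then have "Rq m' (\<xi> i div d) i = Rq m' (\<xi>' i div d) i" using dep[OF m'0, of i] by simp
      then show "zm_r m i \<xi> = zm_r m i \<xi>'"
        using D[OF x dd i, of i] D[OF x' same i, of i] zm_r_eq[OF m x] zm_r_eq[OF m x'] d0 by simp
    qed
  next
    assume R: "\<forall>i\<ge>1. zm_r m i \<xi> = zm_r m i \<xi>'"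
    have "\<xi> 1 = \<xi>' 1" using R[rule_format, of 1] zm_r_eq[OF m x] zm_r_eq[OF m x'] Rq1[OF m x] Rq1[OF m x'] by simp
    then have same: "gcd m (\<xi>' 1) = d" unfolding d_def by simp
    have "zm_proj m' (zm_div m \<xi> d) = zm_proj m' (zm_div m \<xi>' d)"
    proof
      fix h
      show "zm_proj m' (zm_div m \<xi> d) h = zm_proj m' (zm_div m \<xi>' d) h"
      proof (cases "h = 0")
        case True
        then show ?thesis by (simp add: zm_proj_def)
      next
        case False
        then have h: "h \<ge> 1" by simp
        have dig: "Rq m' (\<xi> h div d) j = Rq m' (\<xi>' h div d) j" if j: "1 \<le> j" "j \<le> h" for j
        proof -
          have "Rq m (\<xi> h) j = Rq m (\<xi>' h) j"
            using Rq_stable[OF m x j(2)] Rq_stable[OF m x' j(2)] R[rule_format, OF j(1)]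
              zm_r_eq[OF m x] zm_r_eq[OF m x'] by simp
          then show ?thesis using D[OF x dd h, of j] D[OF x' same h, of j] d0 by simp
        qed
        have cop: "coprime (\<xi> h div d) m'" using part_a_setup(3)[OF m x h] unfolding d_def m'_def .
        have "\<bar>m'\<bar>^h dvd \<xi>' h div d - \<xi> h div d"
          using inj_digits[OF m'0 cop, of h "\<xi>' h div d"] dig by blast
        then have "d * \<bar>m'\<bar>^h dvd d * (\<xi>' h div d - \<xi> h div d)" by simp
        then have "d * \<bar>m'\<bar>^h dvd \<xi>' h - \<xi> h"
          using Y[OF x' same x dd h] by simp
        then have "d * \<bar>m'\<bar>^h dvd \<xi> h - \<xi>' h" by (metis dvd_minus_iff minus_diff_eq)
        then have "\<bar>m'\<bar>^h dvd zm_div m \<xi> d h - zm_div m \<xi>' d h" using C[OF same h] by simp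
        then show ?thesis by (simp add: zm_proj_def mod_eq_dvd_iff)
      qed
    qed
    then show "\<exists>d. d > 0 \<and> zm_gcd m m \<xi> = d \<and> zm_gcd m m \<xi>' = d \<and>
               zm_proj (m div d) (zm_div m \<xi> d) = zm_proj (m div d) (zm_div m \<xi>' d)"
      using d0 zm_gcd_eq[OF m x] zm_gcd_eq[OF m x'] same unfolding d_def m'_def by auto
  qed
qed

lemma cop_mod: "m \<noteq> 0 \<Longrightarrow> coprime (x mod \<bar>m\<bar>) m \<longleftrightarrow> coprime (x::int) m"
proof -
  assume m: "m \<noteq> 0"
  have "coprime (x mod \<bar>m\<bar>) m \<longleftrightarrow> coprime (x mod \<bar>m\<bar>) \<bar>m\<bar>" by simp
  also have "\<dots> \<longleftrightarrow> coprime x \<bar>m\<bar>" by (rule coprime_mod_left_iff) (use m in simp)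
  also have "\<dots> \<longleftrightarrow> coprime x m" by simp
  finally show ?thesis .
qed

lemma cop_stable:
  assumes m: "m \<noteq> 0" and x: "\<xi> \<in> zm m" and h: "h \<ge> 1" and c: "coprime (\<xi> 1) m"
  shows "coprime (\<xi> h) m"
proof -
  have "\<xi> h mod \<bar>m\<bar>^1 = \<xi> 1" by (rule zm_comp[OF x h])
  then have "\<xi> h mod \<bar>m\<bar> = \<xi> 1" by simp
  then show ?thesis using c cop_mod[OF m, of "\<xi> h"] by simp
qed

lemma inv_mod_unique:
  fixes n :: int
  assumes "(x * a) mod n = 1 mod n" "(x * b) mod n = 1 mod n"
  shows "a mod n = b mod n"
proof -
  have "(a * (x * b)) mod n = (a * 1) mod n" using assms(2) by (metis mod_mult_right_eq)
  moreover have "(b * (x * a)) mod n = (b * 1) mod n" using assms(1) by (metis mod_mult_right_eq)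
  moreover have "a * (x * b) = b * (x * a)" by (simp add: algebra_simps)
  ultimately show ?thesis by simp
qed

lemma units_char:
  assumes m: "m \<noteq> 0"
  shows "zm_units m = {x \<in> zm m. coprime (x 1) m}"
proof
  show "zm_units m \<subseteq> {x \<in> zm m. coprime (x 1) m}"
  proof
    fix x assume "x \<in> zm_units m"
    then obtain y where x: "x \<in> zm m" and y: "y \<in> zm m" and e: "zm_mul m x y = zm_of_int m 1"
      unfolding zm_units_def by auto
    have "(x 1 * y 1) mod \<bar>m\<bar> = 1 mod \<bar>m\<bar>" using fun_cong[OF e, of 1] by (simp add: zm_apps)
    then have "\<bar>m\<bar> dvd x 1 * y 1 - 1" by (simp only: mod_eq_dvd_iff)
    then obtain q where q: "x 1 * y 1 - 1 = m * q" by (auto elim: dvdE)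
    have "coprime (x 1) m"
    proof (rule coprimeI)
      fix c assume "c dvd x 1" "c dvd m"
      then have "c dvd x 1 * y 1 - m * q" by (simp add: dvd_diff)
      then show "is_unit c" using q by (simp add: algebra_simps)
    qed
    then show "x \<in> {x \<in> zm m. coprime (x 1) m}" using x by simp
  qed
next
  show "{x \<in> zm m. coprime (x 1) m} \<subseteq> zm_units m"
  proof
    fix x assume "x \<in> {x \<in> zm m. coprime (x 1) m}"
    then have x: "x \<in> zm m" and c: "coprime (x 1) m" by auto
    have ex: "\<exists>y. 0 \<le> y \<and> y < \<bar>m\<bar>^h \<and> (x h * y) mod \<bar>m\<bar>^h = 1 mod \<bar>m\<bar>^h" for h
    proof (cases "h = 0")
      case True
      then show ?thesis by (intro exI[of _ 0]) simp
    next
      case False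
      then have "coprime (x h) m" using cop_stable[OF m x _ c] by simp
      then have "coprime (x h) (\<bar>m\<bar>^h)" by simp
      then obtain u v where uv: "u * x h + v * \<bar>m\<bar>^h = 1" using bezout_int[of "x h" "\<bar>m\<bar>^h"] by auto
      have "(x h * (u mod \<bar>m\<bar>^h)) mod \<bar>m\<bar>^h = (u * x h + v * \<bar>m\<bar>^h) mod \<bar>m\<bar>^h"
        by (simp add: mod_simps mult.commute)
      then show ?thesis using uv m by (intro exI[of _ "u mod \<bar>m\<bar>^h"]) simp
    qed
    define y where "y = (\<lambda>h. SOME y. 0 \<le> y \<and> y < \<bar>m\<bar>^h \<and> (x h * y) mod \<bar>m\<bar>^h = 1 mod \<bar>m\<bar>^h)"
    have yp: "0 \<le> y h \<and> y h < \<bar>m\<bar>^h \<and> (x h * y h) mod \<bar>m\<bar>^h = 1 mod \<bar>m\<bar>^h" for h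
      unfolding y_def by (rule someI_ex[OF ex])
    have yz: "y \<in> zm m"
      unfolding zm_def
    proof (intro CollectI allI conjI)
      fix h
      show "0 \<le> y h" "y h < \<bar>m\<bar>^h" using yp by auto
      have "(x h * (y (Suc h) mod \<bar>m\<bar>^h)) mod \<bar>m\<bar>^h = (x (Suc h) mod \<bar>m\<bar>^h * y (Suc h)) mod \<bar>m\<bar>^h"
        using zm_comp[OF x, of h "Suc h"] by (simp add: mod_simps)
      also have "\<dots> = (x (Suc h) * y (Suc h)) mod \<bar>m\<bar>^Suc h mod \<bar>m\<bar>^h" unfolding mod_suc_pow by (simp add: mod_simps)
      also have "\<dots> = (1 mod \<bar>m\<bar>^Suc h) mod \<bar>m\<bar>^h" using yp[of "Suc h"] by simp
      also have "\<dots> = 1 mod \<bar>m\<bar>^h" by (rule mod_suc_pow)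
      finally have "(y (Suc h) mod \<bar>m\<bar>^h) mod \<bar>m\<bar>^h = y h mod \<bar>m\<bar>^h"
        using inv_mod_unique yp by blast
      then show "y (Suc h) mod \<bar>m\<bar>^h = y h" using yp[of h] by simp
    qed
    have "zm_mul m x y = zm_of_int m 1"
      by (rule ext) (simp add: zm_apps yp)
    then show "x \<in> zm_units m" unfolding zm_units_def using x yz by blast
  qed
qed

lemma units_inj:
  assumes m: "m \<noteq> 0" and x: "\<xi> \<in> zm m" and x': "\<xi>' \<in> zm m" and c: "coprime (\<xi> 1) m"
    and R: "\<forall>i\<ge>1. zm_r m i \<xi> = zm_r m i \<xi>'"
  shows "\<xi> = \<xi>'"
proof (rule zm_eq[OF x x'])
  fix h
  show "\<bar>m\<bar>^h dvd \<xi> h - \<xi>' h"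
  proof (cases "h = 0")
    case True then show ?thesis by simp
  next
    case False
    then have h: "h \<ge> 1" by simp
    have dig: "\<forall>j. 1 \<le> j \<and> j \<le> h \<longrightarrow> Rq m (\<xi> h) j = Rq m (\<xi>' h) j"
    proof (intro allI impI)
      fix j assume j: "1 \<le> j \<and> j \<le> h"
      then show "Rq m (\<xi> h) j = Rq m (\<xi>' h) j"
        using Rq_stable[OF m x, of j h] Rq_stable[OF m x', of j h] R zm_r_eq[OF m x] zm_r_eq[OF m x'] by simp
    qed
    have "\<bar>m\<bar>^h dvd \<xi>' h - \<xi> h" using inj_digits[OF m cop_stable[OF m x h c]] dig by blast
    then show ?thesis by (metis dvd_minus_iff minus_diff_eq)
  qed
qed

definition dg :: "int \<Rightarrow> (nat \<Rightarrow> int) \<Rightarrow> nat \<Rightarrow> int" where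
  "dg u a j = (if j \<le> 1 then u else a (j - 2))"

primrec xs :: "int \<Rightarrow> int \<Rightarrow> (nat \<Rightarrow> int) \<Rightarrow> nat \<Rightarrow> int" where
  "xs m u a 0 = 0"
| "xs m u a (Suc N) = (xs m u a N + m^N * (SOME t. (Rq m (xs m u a N) (Suc N) + xs m u a N ^ N * t) mod \<bar>m\<bar> = dg u a (Suc N))) mod \<bar>m\<bar>^(Suc N)"

declare xs.simps(2)[simp del]

lemma Rq1_mod: "Rq m x 1 = x mod \<bar>m\<bar>"
  by (simp add: Rq.simps)

lemma digit_step:
  assumes m: "m \<noteq> 0" and x: "0 \<le> x" "x < \<bar>m\<bar>^N"
    and D: "\<forall>j. 1 \<le> j \<and> j \<le> N \<longrightarrow> Rq m x j = e j"
    and t: "(Rq m x (Suc N) + x^N * t) mod \<bar>m\<bar> = e (Suc N)"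
  defines "x2 \<equiv> (x + m^N * t) mod \<bar>m\<bar>^(Suc N)"
  shows "0 \<le> x2 \<and> x2 < \<bar>m\<bar>^Suc N \<and> (\<forall>j. 1 \<le> j \<and> j \<le> Suc N \<longrightarrow> Rq m x2 j = e j) \<and> x2 mod \<bar>m\<bar>^N = x"
proof (intro conjI allI impI)
  have mp: "\<bar>m\<bar>^Suc N > 0" using m by simp
  show "0 \<le> x2" "x2 < \<bar>m\<bar>^Suc N" unfolding x2_def using mp by auto
  have c1: "\<bar>m\<bar>^Suc N dvd x2 - (x + m^N * t)" unfolding x2_def
    by (simp add: mod_eq_dvd_iff[symmetric])
  have c2: "\<bar>m\<bar>^N dvd (x + m^N * t) - x" by (simp add: power_abs[symmetric])
  fix j assume j: "1 \<le> j \<and> j \<le> Suc N"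
  have "Rq m x2 j = Rq m (x + m^N * t) j" using dep[OF m c1, of j] j by simp
  also have "\<dots> = e j"
  proof (cases "j = Suc N")
    case True
    then show ?thesis using key[OF m, of x N t] t by simp
  next
    case False
    then have "j \<le> N" using j by simp
    then show ?thesis using dep[OF m c2, of j] D j by simp
  qed
  finally show "Rq m x2 j = e j" .
next
  have c2: "\<bar>m\<bar>^N dvd (x + m^N * t) - x" by (simp add: power_abs[symmetric])
  then have "(x + m^N * t) mod \<bar>m\<bar>^N = x mod \<bar>m\<bar>^N" by (simp only: mod_eq_dvd_iff)
  then show "x2 mod \<bar>m\<bar>^N = x" unfolding x2_def mod_suc_pow using x by simp
qed

lemma xs_inv:
  assumes m: "m \<noteq> 0" and u: "0 \<le> u" "u < \<bar>m\<bar>" "coprime u m" and a: "\<And>i. 0 \<le> a i \<and> a i < \<bar>m\<bar>"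
  shows "0 \<le> xs m u a N \<and> xs m u a N < \<bar>m\<bar>^N \<and> (\<forall>j. 1 \<le> j \<and> j \<le> N \<longrightarrow> Rq m (xs m u a N) j = dg u a j)
      \<and> (N \<ge> 1 \<longrightarrow> coprime (xs m u a N) m) \<and> xs m u a (Suc N) mod \<bar>m\<bar>^N = xs m u a N"
proof (induction N)
  case 0
  have "xs m u a 1 mod 1 = 0" by simp
  then show ?case by simp
next
  case (Suc N)
  define x where "x = xs m u a N"
  have x: "0 \<le> x" "x < \<bar>m\<bar>^N" "\<forall>j. 1 \<le> j \<and> j \<le> N \<longrightarrow> Rq m x j = dg u a j"
    "N \<ge> 1 \<longrightarrow> coprime x m"
    using Suc.IH unfolding x_def by auto
  have cop: "coprime (x^N) m" using x(4) by (cases N) auto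
  have g: "0 \<le> dg u a (Suc N)" "dg u a (Suc N) < \<bar>m\<bar>" using u a by (auto simp: dg_def)
  have ex: "\<exists>t. (Rq m x (Suc N) + x^N * t) mod \<bar>m\<bar> = dg u a (Suc N)"
    by (rule solve_digit[OF m cop g])
  define t where "t = (SOME t. (Rq m x (Suc N) + x^N * t) mod \<bar>m\<bar> = dg u a (Suc N))"
  have t: "(Rq m x (Suc N) + x^N * t) mod \<bar>m\<bar> = dg u a (Suc N)" unfolding t_def by (rule someI_ex[OF ex])
  have xsS: "xs m u a (Suc N) = (x + m^N * t) mod \<bar>m\<bar>^(Suc N)" unfolding x_def t_def by (simp only: xs.simps(2))
  note st = digit_step[OF m x(1,2,3) t, folded xsS]
  have dig1: "Rq m (xs m u a (Suc N)) 1 = u" using st by (simp add: dg_def)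
  have e1: "xs m u a (Suc N) mod \<bar>m\<bar> = u" using dig1 unfolding Rq1_mod .
  have cS: "coprime (xs m u a (Suc N)) m" using cop_mod[OF m, of "xs m u a (Suc N)", unfolded e1] u(3) by blast
  define y where "y = xs m u a (Suc N)"
  have y: "0 \<le> y" "y < \<bar>m\<bar>^Suc N" "\<forall>j. 1 \<le> j \<and> j \<le> Suc N \<longrightarrow> Rq m y j = dg u a j"
    using st unfolding y_def by auto
  have copy: "coprime (y^Suc N) m" using cS unfolding y_def by simp
  have g2: "0 \<le> dg u a (Suc (Suc N))" "dg u a (Suc (Suc N)) < \<bar>m\<bar>" using u a by (auto simp: dg_def)
  have ex2: "\<exists>t. (Rq m y (Suc (Suc N)) + y^Suc N * t) mod \<bar>m\<bar> = dg u a (Suc (Suc N))"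
    by (rule solve_digit[OF m copy g2])
  define t2 where "t2 = (SOME t. (Rq m y (Suc (Suc N)) + y^Suc N * t) mod \<bar>m\<bar> = dg u a (Suc (Suc N)))"
  have t2: "(Rq m y (Suc (Suc N)) + y^Suc N * t2) mod \<bar>m\<bar> = dg u a (Suc (Suc N))" unfolding t2_def by (rule someI_ex[OF ex2])
  have xsSS: "xs m u a (Suc (Suc N)) = (y + m^Suc N * t2) mod \<bar>m\<bar>^(Suc (Suc N))" unfolding y_def t2_def
    by (simp only: xs.simps(2))
  note st2 = digit_step[OF m y t2, folded xsSS]
  show ?case using st st2 cS unfolding y_def by auto
qed

lemma xs_zm:
  assumes m: "m \<noteq> 0" and u: "0 \<le> u" "u < \<bar>m\<bar>" "coprime u m" and a: "\<And>i. 0 \<le> a i \<and> a i < \<bar>m\<bar>"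
  shows "xs m u a \<in> zm_units m" "\<And>i. i \<ge> 1 \<Longrightarrow> zm_r m i (xs m u a) = dg u a i"
proof -
  note XI = xs_inv[OF m u a]
  have z: "xs m u a \<in> zm m" unfolding zm_def using XI by auto
  show "xs m u a \<in> zm_units m" unfolding units_char[OF m] using z XI[where N=1] by auto
  fix i :: nat assume "i \<ge> 1"
  then show "zm_r m i (xs m u a) = dg u a i" using zm_r_eq[OF m z] XI[where N=i] by auto
qed

abbreviation PT :: "int \<Rightarrow> (nat \<Rightarrow> int) topology" where
  "PT m \<equiv> product_topology (\<lambda>h. discrete_topology {0..<\<bar>m\<bar> ^ h}) UNIV"

lemma proj_cont: "continuous_map (PT m) (discrete_topology {0..<\<bar>m\<bar>^i}) (\<lambda>x. x i)"
  using continuous_map_product_projection[of i UNIV "\<lambda>h. discrete_topology {0..<\<bar>m\<bar> ^ h}"] by simp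

lemma coord_cont:
  assumes "g \<in> {0..<\<bar>m\<bar>^i} \<rightarrow> V"
  shows "continuous_map (subtopology (PT m) S) (discrete_topology V) (\<lambda>x. g (x i))"
proof -
  have "continuous_map (discrete_topology {0..<\<bar>m\<bar>^i}) (discrete_topology V) g" using assms by simp
  then have "continuous_map (PT m) (discrete_topology V) (g \<circ> (\<lambda>x. x i))"
    by (rule continuous_map_compose[OF proj_cont])
  then show ?thesis by (simp add: o_def continuous_map_from_subtopology)
qed

lemma topspace_PT: "topspace (PT m) = {x. \<forall>h. x h \<in> {0..<\<bar>m\<bar>^h}}"
  by (auto simp: PiE_def extensional_def)

lemma zm_sub_top: "zm m \<subseteq> topspace (PT m)"
  unfolding topspace_PT by (auto simp: zm_def)

lemma units_closed:
  assumes m: "m \<noteq> 0"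
  shows "closedin (PT m) (zm_units m)"
proof -
  define A where "A = {x \<in> topspace (PT m). x 1 \<in> {v \<in> {0..<\<bar>m\<bar>^1}. coprime v m}}"
  define B where "B = (\<lambda>h. {x \<in> topspace (PT m). x (Suc h) mod \<bar>m\<bar>^h = x h})"
  have eq: "zm_units m = A \<inter> \<Inter> (range B)"
  proof
    show "zm_units m \<subseteq> A \<inter> \<Inter> (range B)"
    proof
      fix x assume "x \<in> zm_units m"
      then have x: "x \<in> zm m" "coprime (x 1) m" by (auto simp: units_char[OF m])
      have "0 \<le> x 1" "x 1 < \<bar>m\<bar>" using zm_range[OF x(1), of 1] by auto
      then show "x \<in> A \<inter> \<Inter> (range B)" using x zm_sub_top[of m] unfolding A_def B_def
        by (auto simp: zm_def)
    qed
    show "A \<inter> \<Inter> (range B) \<subseteq> zm_units m"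
      unfolding units_char[OF m] A_def B_def topspace_PT by (auto simp: zm_def)
  qed
  have cA: "closedin (PT m) A" unfolding A_def
    by (rule closedin_continuous_map_preimage[OF proj_cont]) auto
  have cB: "closedin (PT m) (B h)" for h
  proof -
    have f: "continuous_map (subtopology (PT m) UNIV) (discrete_topology {0..<\<bar>m\<bar>^h}) (\<lambda>x. (\<lambda>v. v mod \<bar>m\<bar>^h) (x (Suc h)))"
      by (rule coord_cont) (use m in auto)
    have g: "continuous_map (subtopology (PT m) UNIV) (discrete_topology {0..<\<bar>m\<bar>^h}) (\<lambda>x. (\<lambda>v. v) (x h))"
      by (rule coord_cont) auto
    show ?thesis unfolding B_def
      using closedin_continuous_maps_eq[OF Hausdorff_space_discrete_topology f g] by simp
  qed
  show ?thesis unfolding eq using cA cB by (intro closedin_Int closedin_Inter) auto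
qed

lemma part_b:
  assumes m: "m \<noteq> 0"
  shows "homeomorphic_map (subtopology (zm_top m) (zm_units m))
           (prod_topology (discrete_topology {u \<in> {0..<\<bar>m\<bar>}. coprime u m})
                          (product_topology (\<lambda>_. discrete_topology {0..<\<bar>m\<bar>}) UNIV))
           (\<lambda>\<xi>. (zm_r m 1 \<xi>, \<lambda>i. zm_r m (i + 2) \<xi>))"
proof -
  have uz: "zm_units m \<subseteq> zm m" unfolding zm_units_def by auto
  have X: "subtopology (zm_top m) (zm_units m) = subtopology (PT m) (zm_units m)"
    unfolding zm_top_def subtopology_subtopology using uz by (simp add: Int_absorb1)
  have tX: "topspace (subtopology (PT m) (zm_units m)) = zm_units m"
    using uz zm_sub_top[of m] by auto
  have unitI: "\<xi> \<in> zm m" "coprime (\<xi> 1) m" if "\<xi> \<in> zm_units m" for \<xi>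
    using that unfolding units_char[OF m] by auto
  let ?f = "\<lambda>\<xi>. (zm_r m 1 \<xi>, \<lambda>i. zm_r m (i + 2) \<xi>)"
  let ?Y = "prod_topology (discrete_topology {u \<in> {0..<\<bar>m\<bar>}. coprime u m})
                          (product_topology (\<lambda>_. discrete_topology {0..<\<bar>m\<bar>}) (UNIV :: nat set))"
  have r1: "zm_r m 1 \<xi> = \<xi> 1" if "\<xi> \<in> zm m" for \<xi>
    using zm_r_eq[OF m that] Rq1[OF m that] by simp
  have cont: "continuous_map (subtopology (PT m) (zm_units m)) ?Y ?f"
    unfolding continuous_map_pairwise o_def
  proof
    have D0: "discrete_topology {u \<in> {0..<\<bar>m\<bar>}. coprime u m} = subtopology (discrete_topology {0..<\<bar>m\<bar>}) {u. coprime u m}"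
      by (simp add: Int_def)
    have c1: "continuous_map (subtopology (PT m) (zm_units m)) (discrete_topology {0..<\<bar>m\<bar>}) (\<lambda>x. (\<lambda>v. Rq m v 1) (x 1))"
      by (rule coord_cont) (use Rq_range[OF m] in auto)
    have c1': "continuous_map (subtopology (PT m) (zm_units m)) (discrete_topology {0..<\<bar>m\<bar>}) (\<lambda>x. zm_r m 1 x)"
      by (rule continuous_map_eq[OF c1]) (use tX unitI zm_r_eq[OF m] in auto)
    show "continuous_map (subtopology (PT m) (zm_units m)) (discrete_topology {u \<in> {0..<\<bar>m\<bar>}. coprime u m}) (\<lambda>x. fst (?f x))"
      unfolding D0 continuous_map_in_subtopology using c1' tX unitI r1 by auto
    show "continuous_map (subtopology (PT m) (zm_units m)) (product_topology (\<lambda>_. discrete_topology {0..<\<bar>m\<bar>}) UNIV) (\<lambda>x. snd (?f x))"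
      unfolding continuous_map_componentwise_UNIV
    proof
      fix k
      have c: "continuous_map (subtopology (PT m) (zm_units m)) (discrete_topology {0..<\<bar>m\<bar>}) (\<lambda>x. (\<lambda>v. Rq m v (k+2)) (x (k+2)))"
        by (rule coord_cont) (use Rq_range[OF m] in auto)
      show "continuous_map (subtopology (PT m) (zm_units m)) (discrete_topology {0..<\<bar>m\<bar>}) (\<lambda>x. snd (?f x) k)"
        by (rule continuous_map_eq[OF c]) (use tX unitI zm_r_eq[OF m] in auto)
    qed
  qed
  have comp: "compact_space (subtopology (PT m) (zm_units m))"
  proof -
    have "compact_space (PT m)" by (simp add: compact_space_product_topology compact_space_discrete_topology)
    then have "compactin (PT m) (zm_units m)" using units_closed[OF m] by (rule closedin_compact_space)
    then show ?thesis by (rule compact_space_subtopology)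
  qed
  have haus: "Hausdorff_space ?Y"
    by (simp add: Hausdorff_space_prod_topology Hausdorff_space_product_topology)
  have surj: "?f ` topspace (subtopology (PT m) (zm_units m)) = topspace ?Y"
  proof
    show "?f ` topspace (subtopology (PT m) (zm_units m)) \<subseteq> topspace ?Y"
    proof
      fix y assume "y \<in> ?f ` topspace (subtopology (PT m) (zm_units m))"
      then obtain \<xi> where \<xi>: "\<xi> \<in> zm_units m" and y: "y = ?f \<xi>" using tX by auto
      have z: "\<xi> \<in> zm m" and c: "coprime (\<xi> 1) m" using unitI[OF \<xi>] by auto
      have e1: "zm_r m 1 \<xi> = \<xi> 1" by (rule r1[OF z])
      have b1: "0 \<le> \<xi> 1 \<and> \<xi> 1 < \<bar>m\<bar>" using zm_range[OF z, of 1] by simp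
      have b2: "\<forall>i. 0 \<le> zm_r m (i+2) \<xi> \<and> zm_r m (i+2) \<xi> < \<bar>m\<bar>"
        using zm_r_eq[OF m z] Rq_range[OF m] by simp
      show "y \<in> topspace ?Y" unfolding y using e1 b1 b2 c by (simp add: PiE_iff)
    qed
    show "topspace ?Y \<subseteq> ?f ` topspace (subtopology (PT m) (zm_units m))"
    proof
      fix y assume yY: "y \<in> topspace ?Y"
      obtain u :: int and a :: "nat \<Rightarrow> int" where y: "y = (u, a)" by (cases y)
      have u: "0 \<le> u" "u < \<bar>m\<bar>" "coprime u m" using yY y by auto
      have a: "\<And>i. 0 \<le> a i \<and> a i < \<bar>m\<bar>" using yY y by (auto simp: PiE_iff)
      note XZ = xs_zm[OF m u a]
      have f1: "zm_r m 1 (xs m u a) = u" using XZ(2)[of 1] by (simp add: dg_def)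
      have f2: "(\<lambda>i. zm_r m (i + 2) (xs m u a)) = a"
      proof
        fix i
        have "zm_r m (i + 2) (xs m u a) = dg u a (i + 2)" by (rule XZ(2)) simp
        then show "zm_r m (i + 2) (xs m u a) = a i" by (simp add: dg_def)
      qed
      have fx: "?f (xs m u a) = y" unfolding y using f1 f2 by simp
      have "xs m u a \<in> topspace (subtopology (PT m) (zm_units m))" using XZ(1) tX by simp
      then show "y \<in> ?f ` topspace (subtopology (PT m) (zm_units m))" by (rule image_eqI[of y ?f "xs m u a", OF fx[symmetric]])
    qed
  qed
  have inj: "inj_on ?f (topspace (subtopology (PT m) (zm_units m)))"
  proof (rule inj_onI)
    fix \<xi> \<xi>' assume a: "\<xi> \<in> topspace (subtopology (PT m) (zm_units m))" "\<xi>' \<in> topspace (subtopology (PT m) (zm_units m))"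
      and e: "?f \<xi> = ?f \<xi>'"
    have R: "\<forall>i\<ge>1. zm_r m i \<xi> = zm_r m i \<xi>'"
    proof (intro allI impI)
      fix i :: nat assume i: "i \<ge> 1"
      show "zm_r m i \<xi> = zm_r m i \<xi>'"
      proof (cases "i = 1")
        case True then show ?thesis using e by simp
      next
        case False
        then have "i = (i - 2) + 2" using i by simp
        moreover have "zm_r m ((i - 2) + 2) \<xi> = zm_r m ((i - 2) + 2) \<xi>'"
          using fun_cong[OF arg_cong[OF e, of snd], of "i - 2"] by simp
        ultimately show ?thesis by simp
      qed
    qed
    have u1: "\<xi> \<in> zm_units m" "\<xi>' \<in> zm_units m" using a tX by auto
    show "\<xi> = \<xi>'" by (rule units_inj[OF m unitI(1)[OF u1(1)] unitI(1)[OF u1(2)] unitI(2)[OF u1(1)] R])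
  qed
  have "homeomorphic_map (subtopology (PT m) (zm_units m)) ?Y ?f"
    by (rule bijective_closed_imp_homeomorphic_map[OF cont continuous_imp_closed_map[OF cont comp haus] surj inj])
  then show ?thesis unfolding X .
qed

theorem proposition2p4:
  fixes m :: int
  assumes "m \<noteq> 0"
  shows "(\<forall>\<xi> \<in> zm m. \<forall>\<xi>' \<in> zm m.
            (\<exists>d::int. d > 0 \<and> zm_gcd m m \<xi> = d \<and> zm_gcd m m \<xi>' = d \<and>
               zm_proj (m div d) (zm_div m \<xi> d) = zm_proj (m div d) (zm_div m \<xi>' d))
            \<longleftrightarrow> (\<forall>i\<ge>1. zm_r m i \<xi> = zm_r m i \<xi>'))
       \<and> homeomorphic_map (subtopology (zm_top m) (zm_units m))
           (prod_topology (discrete_topology {u \<in> {0..<\<bar>m\<bar>}. coprime u m})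
                          (product_topology (\<lambda>_. discrete_topology {0..<\<bar>m\<bar>}) UNIV))
           (\<lambda>\<xi>. (zm_r m 1 \<xi>, \<lambda>i. zm_r m (i + 2) \<xi>))"
proof -
  have A: "\<forall>\<xi> \<in> zm m. \<forall>\<xi>' \<in> zm m.
            (\<exists>d::int. d > 0 \<and> zm_gcd m m \<xi> = d \<and> zm_gcd m m \<xi>' = d \<and>
               zm_proj (m div d) (zm_div m \<xi> d) = zm_proj (m div d) (zm_div m \<xi>' d))
            \<longleftrightarrow> (\<forall>i\<ge>1. zm_r m i \<xi> = zm_r m i \<xi>')"
  proof (intro ballI)
    fix \<xi> \<xi>' assume "\<xi> \<in> zm m" "\<xi>' \<in> zm m"
    then show "(\<exists>d::int. d > 0 \<and> zm_gcd m m \<xi> = d \<and> zm_gcd m m \<xi>' = d \<and>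
               zm_proj (m div d) (zm_div m \<xi> d) = zm_proj (m div d) (zm_div m \<xi>' d))
            \<longleftrightarrow> (\<forall>i\<ge>1. zm_r m i \<xi> = zm_r m i \<xi>')"
      by (rule part_a[OF assms])
  qed
  show ?thesis using A part_b[OF assms] by (rule conjI)
qed

end
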